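(* Let $n\ge5$ be odd and write $c_j=\cos(2\pi j/n)$. Then $$Su_4:=\frac32\sum_{j=\lceil n/4\rceil}^{(n-1)/2}\ \sum_{k=\lceil n/4\rceil}^{(n-1)/2}\frac{1}{|c_j-c_k+1|}\ \le\ \frac{3}{32}\,n^2\ln n.$$
   Context: $\ln$ denotes the natural logarithm. *)

theory Defs
  imports Complex_Main
begin

definition cc :: "nat \<Rightarrow> nat \<Rightarrow> real" where
  "cc n j = cos (2 * pi * real j / real n)"

end

theory Submission
  imports Defs "HOL-Analysis.Analysis"
begin

lemma pi_lb: "(31415/10000::real) \<le> pi"
proof -
  have "(31415/10000::real) \<le> 3.141592653588" by simp
  also have "\<dots> \<le> pi" by (rule pi_approx(1))
  finally show ?thesis .
qed
lemma pi_ub: "pi \<le> (31416/10000::real)"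
proof -
  have "pi \<le> 3.1415926535899" by (rule pi_approx(2))
  also have "\<dots> \<le> (31416/10000::real)" by simp
  finally show ?thesis .
qed

lemma sin_ge_cubic:
  fixes x :: real assumes "0 \<le> x"
  shows "x - x^3/6 \<le> sin x"
proof (cases "x = 0")
  case True then show ?thesis by simp
next
  case False
  with assms have x: "x > 0" by simp
  from Maclaurin_sin_expansion3[of 3 x] x obtain t where
    t: "0 < t" "t < x" "sin x = (\<Sum>m<3. sin_coeff m * x ^ m) + (sin (t + 1/2 * real 3 * pi) / fact 3) * x ^ 3"
    by auto
  have s: "(\<Sum>m<3. sin_coeff m * x ^ m) = x"
    by (simp add: numeral_3_eq_3 sin_coeff_def)
  have "sin (t + 1/2 * real 3 * pi) = - cos t"
  proof -
    have "sin (t + 1/2 * real 3 * pi) = sin ((t - pi/2) + 2*pi)" by (rule arg_cong[where f=sin]) simp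
    also have "\<dots> = sin (t - pi/2)" by (rule sin_periodic)
    also have "\<dots> = - cos t" by (simp add: sin_diff)
    finally show ?thesis .
  qed
  then have "sin x = x - cos t * x^3 / 6" using t(3) s by (simp add: fact_numeral)
  moreover have "cos t * x^3 \<le> x^3" using x by (simp add: mult_left_le_one_le)
  ultimately show ?thesis by (simp add: divide_right_mono)
qed

lemma cos_le_quartic:
  fixes x :: real
  shows "cos x \<le> 1 - x^2/2 + x^4/24"
proof -
  have main: "cos y \<le> 1 - y^2/2 + y^4/24" if y: "y > 0" for y :: real
  proof -
    from Maclaurin_cos_expansion2[of y 4] y obtain t where
      t: "0 < t" "t < y" "cos y = (\<Sum>m<4. cos_coeff m * y ^ m) + (cos (t + 1/2 * real 4 * pi) / fact 4) * y ^ 4"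
      by auto
    have s: "(\<Sum>m<4. cos_coeff m * y ^ m) = 1 - y^2/2"
    proof -
      have "\<not> (2::nat) dvd 3" by presburger
      then show ?thesis by (simp add: eval_nat_numeral cos_coeff_def)
    qed
    have "cos (t + 1/2 * real 4 * pi) = cos t"
    proof -
      have "t + 1/2 * real 4 * pi = t + 2*pi" by simp
      then show ?thesis by simp
    qed
    then have "cos y = 1 - y^2/2 + cos t * y^4/24" using t(3) s by (simp add: fact_numeral)
    moreover have "cos t * y^4 \<le> y^4" using mult_right_mono[OF cos_le_one[of t], of "y^4"] by simp
    ultimately show ?thesis by (simp add: divide_right_mono)
  qed
  show ?thesis
  proof (cases "x = 0")
    case True then show ?thesis by simp
  next
    case False
    then have "x > 0 \<or> -x > 0" by auto
    then show ?thesis using main[of x] main[of "-x"] by auto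
  qed
qed

lemma sin_over_mono:
  fixes x y :: real
  assumes "0 < x" "x \<le> y" "y \<le> pi/2"
  shows "sin y * x \<le> sin x * y"
proof -
  let ?f = "\<lambda>t. sin t / t"
  have "?f y \<le> ?f x"
  proof (rule DERIV_nonpos_imp_nonincreasing[OF assms(2)])
    fix t assume t: "x \<le> t" "t \<le> y"
    with assms have tp: "t > 0" "t \<le> pi/2" by auto
    have d: "DERIV ?f t :> (cos t * t - sin t * 1) / (t * t)"
      using tp by (auto intro!: derivative_eq_intros)
    have "t * cos t \<le> sin t"
    proof (cases "t = pi/2")
      case True
      show ?thesis unfolding True by simp
    next
      case False
      with tp have lt: "t < pi/2" by simp
      have c: "cos t > 0" using tp lt by (intro cos_gt_zero_pi) auto
      have "\<bar>t\<bar> \<le> \<bar>tan t\<bar>" using abs_tan_ge[of t] tp lt by simp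
      moreover have "tan t > 0" using tp lt tan_gt_zero by auto
      ultimately have "t \<le> tan t" using tp by simp
      then have "t * cos t \<le> tan t * cos t" using c by (simp add: mult_right_mono)
      also have "\<dots> = sin t" using c by (simp add: tan_def)
      finally show ?thesis .
    qed
    then have "(cos t * t - sin t * 1) / (t * t) \<le> 0"
      using tp by (simp add: divide_nonpos_pos mult.commute)
    with d show "\<exists>d. DERIV ?f t :> d \<and> d \<le> 0" by blast
  qed
  then show ?thesis using assms by (simp add: divide_simps)
qed

lemma sin_ge_lin:
  fixes x :: real assumes "0 \<le> x" "x \<le> pi/2"
  shows "2 * x / pi \<le> sin x"
proof (cases "x = 0")
  case True then show ?thesis by simp
next
  case False
  with assms have "x > 0" by simp
  from sin_over_mono[OF this assms(2) order_refl] have "x \<le> sin x * (pi/2)" by simp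
  then show ?thesis by (simp add: field_simps)
qed

lemma one_minus_cos_ge:
  fixes y :: real assumes "0 \<le> y" "y \<le> pi/2"
  shows "4 * y^2 / pi^2 \<le> 1 - cos y"
proof (cases "y = 0")
  case True then show ?thesis by simp
next
  case False
  with assms have yp: "y/2 > 0" by simp
  from sin_over_mono[of "y/2" "pi/4"] yp assms
  have h: "sin (pi/4) * (y/2) \<le> sin (y/2) * (pi/4)" by simp
  have s0: "0 \<le> sin (pi/4) * (y/2)" using assms by (simp add: sin_45)
  have "(sin (pi/4) * (y/2))^2 \<le> (sin (y/2) * (pi/4))^2"
    using h s0 by (simp add: power_mono)
  then have "(1/2) * (y^2/4) \<le> sin (y/2) ^2 * (pi^2/16)"
    by (simp add: sin_45 power_mult_distrib power_divide)
  then have "2 * y^2 / pi^2 \<le> sin (y/2)^2" by (simp add: field_simps)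
  moreover have "cos y = 1 - 2 * sin (y/2)^2" using cos_double_sin[of "y/2"] by simp
  ultimately show ?thesis by simp
qed

definition Pn :: "nat \<Rightarrow> nat \<Rightarrow> real" where
  "Pn n j = 4 * (real n - 2 * real j)^2 / (real n)^2"
definition Qn :: "nat \<Rightarrow> nat \<Rightarrow> real" where
  "Qn n k = (if 4 * k = n + 1 then 3 / (2 * real n) else (4 * real k - real n) / real n)"

lemma range_facts:
  assumes "nat \<lceil>real n / 4\<rceil> \<le> j" "j \<le> (n - 1) div 2" "odd n"
  shows "n < 4 * j" "2 * j + 1 \<le> n"
proof -
  have "\<lceil>real n / 4\<rceil> \<le> int j" using assms(1) by (simp add: nat_le_iff)
  then have "real n / 4 \<le> real j" by (simp add: ceiling_le_iff)
  then have "n \<le> 4 * j" by linarith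
  moreover have "n \<noteq> 4 * j" using assms(3) by auto
  ultimately show "n < 4 * j" by simp
  show "2 * j + 1 \<le> n" using assms(2,3) by (auto elim!: oddE)
qed

lemma p_bound:
  assumes "n < 4 * j" "2 * j + 1 \<le> n"
  shows "Pn n j \<le> 1 + cc n j"
proof -
  have n0: "real n > 0" using assms by simp
  define y where "y = pi * (real n - 2 * real j) / real n"
  have "2 * pi * real j / real n = pi - y" using n0 unfolding y_def by (simp add: field_simps)
  then have c: "cc n j = - cos y" unfolding cc_def by simp
  have a0: "0 \<le> real n - 2 * real j" using assms by linarith
  have "real n \<le> real (4 * j)" using assms(1) by (simp only: of_nat_le_iff)
  then have a1: "2 * (real n - 2 * real j) \<le> real n" by simp
  have y0: "0 \<le> y" unfolding y_def using a0 n0 by simp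
  have y1: "y \<le> pi / 2" unfolding y_def using a1 n0 by (simp add: field_simps)
  have "4 * y^2 / pi^2 = Pn n j" unfolding y_def Pn_def
    by (simp add: power_divide power_mult_distrib)
  with one_minus_cos_ge[OF y0 y1] c show ?thesis by simp
qed

lemma q_bound:
  assumes "n < 4 * k" "2 * k + 1 \<le> n" "n \<ge> 5"
  shows "Qn n k \<le> - cc n k"
proof -
  have n0: "real n > 0" using assms by simp
  define x where "x = pi * (4 * real k - real n) / (2 * real n)"
  have "2 * pi * real k / real n = x + pi/2" using n0 unfolding x_def by (simp add: field_simps)
  then have c: "- cc n k = sin x" unfolding cc_def by (simp add: cos_add)
  have "real n \<le> real (4 * k)" using assms(1) by (simp only: of_nat_le_iff)
  then have b0: "0 \<le> 4 * real k - real n" by simp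
  have b1: "4 * real k - real n \<le> real n" using assms by linarith
  have x0: "0 \<le> x" unfolding x_def using b0 n0 by simp
  have x1: "x \<le> pi / 2" unfolding x_def using b1 n0 by (simp add: field_simps)
  show ?thesis
  proof (cases "4 * k = n + 1")
    case False
    have "2 * x / pi = (4 * real k - real n) / real n" unfolding x_def using n0 by (simp add: field_simps)
    with sin_ge_lin[OF x0 x1] c False show ?thesis unfolding Qn_def by simp
  next
    case True
    then have "real (4 * k) = real (n + 1)" by (simp only:)
    then have "4 * real k = real n + 1" by simp
    then have xe: "x = pi / (2 * real n)" unfolding x_def by simp
    have pi1: "157/50 \<le> pi" using pi_lb by linarith
    have pi2: "pi < 4" by (rule pi_less_4)
    have nn: "real n \<ge> 5" using assms by simp
    have "3 / (2 * real n) \<le> x - x^3/6"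
    proof -
      have "pi^3 \<le> 4^3" by (rule power_mono) (use pi2 in auto)
      then have p3: "pi^3 \<le> 64" by simp
      have "25 \<le> (real n)^2" using power_mono[OF nn, of 2] by simp
      then have "25 * (24 * pi - 72) \<le> (real n)^2 * (24 * pi - 72)"
        using pi1 by (intro mult_right_mono) auto
      moreover have "64 \<le> 25 * (24 * pi - 72)" using pi1 by (simp add: algebra_simps)
      ultimately have "pi^3 \<le> (real n)^2 * (24 * pi - 72)" using p3 by linarith
      also have "\<dots> = (24 * (real n)^2) * (pi - 3)" by (simp add: algebra_simps)
      finally have "pi^3 \<le> (24 * (real n)^2) * (pi - 3)" .
      then have "pi^3 / (24 * (real n)^2) \<le> pi - 3" using n0 by (simp add: divide_le_eq mult.commute)
      then have "3 \<le> pi - pi^3 / (24 * (real n)^2)" by simp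
      then have "3 / (2 * real n) \<le> (pi - pi^3 / (24 * (real n)^2)) / (2 * real n)"
        using n0 by (intro divide_right_mono) auto
      also have "\<dots> = x - x^3/6" unfolding xe
        by (simp add: power_divide diff_divide_distrib power_mult_distrib power3_eq_cube power2_eq_square)
      finally show ?thesis .
    qed
    with sin_ge_cubic[OF x0] c True show ?thesis unfolding Qn_def by simp
  qed
qed

lemma Qn_pos: assumes "n < 4 * k" "0 < n" shows "0 < Qn n k"
proof -
  have "real n < real (4 * k)" using assms(1) by (simp only: of_nat_less_iff)
  then show ?thesis using assms(2) unfolding Qn_def by auto
qed

lemma Pn_nonneg: "0 \<le> Pn n j" unfolding Pn_def by simp

lemma term_bound:
  assumes "n \<ge> 5" "odd n"
    "nat \<lceil>real n / 4\<rceil> \<le> j" "j \<le> (n - 1) div 2"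
    "nat \<lceil>real n / 4\<rceil> \<le> k" "k \<le> (n - 1) div 2"
  shows "1 / \<bar>cc n j - cc n k + 1\<bar> \<le> 1 / (Pn n j + Qn n k)"
proof -
  note rj = range_facts[OF assms(3,4,2)] and rk = range_facts[OF assms(5,6,2)]
  have p: "Pn n j \<le> 1 + cc n j" by (rule p_bound[OF rj])
  have q: "Qn n k \<le> - cc n k" by (rule q_bound[OF rk assms(1)])
  have pos: "0 < Pn n j + Qn n k" using Pn_nonneg[of n j] Qn_pos[OF rk(1)] assms(1) by linarith
  have "Pn n j + Qn n k \<le> cc n j - cc n k + 1" using p q by linarith
  then have "Pn n j + Qn n k \<le> \<bar>cc n j - cc n k + 1\<bar>" by linarith
  then show ?thesis using pos by (intro divide_left_mono) auto
qed

lemma ln_tele: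
  fixes f :: "nat \<Rightarrow> real"
  assumes pos: "\<And>k. k \<ge> k0 \<Longrightarrow> f k > 0" and step: "\<And>k. f (Suc k) = f k + d" and d: "d > 0"
  shows "k0 \<le> K \<Longrightarrow> (\<Sum>k\<in>{k0<..K}. 1 / f k) \<le> (ln (f K) - ln (f k0)) / d"
proof (induction K)
  case 0 then show ?case by simp
next
  case (Suc K)
  show ?case
  proof (cases "k0 = Suc K")
    case True then show ?thesis by simp
  next
    case False
    with Suc.prems have kk: "k0 \<le> K" by simp
    have fk: "f K > 0" using pos kk by simp
    have fs: "f (Suc K) > 0" using pos kk by simp
    have "ln (f K) - ln (f (Suc K)) \<le> (f K - f (Suc K)) / f (Suc K)"
      by (rule ln_diff_le[OF fk fs])
    then have "ln (f K) - ln (f (Suc K)) \<le> - d / f (Suc K)" using step[of K] by simp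
    then have h: "1 / f (Suc K) \<le> (ln (f (Suc K)) - ln (f K)) / d"
      using d fs by (simp add: field_simps)
    have "{k0<..Suc K} = insert (Suc K) {k0<..K}" using kk by auto
    then have "(\<Sum>k\<in>{k0<..Suc K}. 1 / f k) = 1 / f (Suc K) + (\<Sum>k\<in>{k0<..K}. 1 / f k)" by simp
    also have "\<dots> \<le> (ln (f (Suc K)) - ln (f K)) / d + (ln (f K) - ln (f k0)) / d"
      using h Suc.IH[OF kk] by simp
    also have "\<dots> = (ln (f (Suc K)) - ln (f k0)) / d" by (simp add: diff_divide_distrib)
    finally show ?thesis .
  qed
qed

definition Fa :: "real \<Rightarrow> real \<Rightarrow> real" where
  "Fa M x = arctan (2 * x / sqrt M) / (2 * sqrt M)"

lemma Fa_deriv: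
  assumes "M > 0"
  shows "DERIV (Fa M) x :> 1 / (4 * x^2 + M)"
proof -
  have s: "sqrt M > 0" using assms by simp
  have "DERIV (\<lambda>x. arctan (2 * x / sqrt M) / (2 * sqrt M)) x :>
          inverse (1 + (2 * x / sqrt M)^2) * (2 / sqrt M) / (2 * sqrt M)"
    using assms by (auto intro!: derivative_eq_intros simp: s)
  moreover have "inverse (1 + (2 * x / sqrt M)^2) * (2 / sqrt M) / (2 * sqrt M) = 1 / (4 * x^2 + M)"
  proof -
    have sq: "(sqrt M)^2 = M" using assms by simp
    have "(2 * x / sqrt M)^2 = 4 * x^2 / M"
      by (simp add: power_divide power_mult_distrib sq)
    then have "1 + (2 * x / sqrt M)^2 = (4 * x^2 + M) / M"
      using assms by (simp add: add_divide_distrib)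
    moreover have "(2 / sqrt M) / (2 * sqrt M) = 1 / M"
    proof -
      have "(2 / sqrt M) / (2 * sqrt M) = 1 / (sqrt M)^2" using s by (simp add: power2_eq_square)
      then show ?thesis by (simp add: sq)
    qed
    moreover have "4 * x^2 + M > 0" using assms by (simp add: add_nonneg_pos)
    ultimately show ?thesis using assms by simp
  qed
  ultimately show ?thesis unfolding Fa_def[abs_def] by simp
qed

lemma arct_step:
  assumes M: "M > 0" and a: "a \<ge> 1"
  shows "2 / (4 * a^2 + M) \<le> Fa M a - Fa M (a - 2)"
proof -
  let ?c = "1 / (4 * a^2 + M)"
  let ?h = "\<lambda>x. Fa M x - x * ?c"
  have "?h (a - 2) \<le> ?h a"
  proof (rule DERIV_nonneg_imp_nondecreasing[of "a - 2" a])
    show "a - 2 \<le> a" by simp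
  next
    fix x assume x: "a - 2 \<le> x" "x \<le> a"
    have d2: "DERIV (\<lambda>x. x * ?c) x :> 1 * ?c" by (rule DERIV_cmult_right[OF DERIV_ident])
    have "DERIV ?h x :> 1 / (4 * x^2 + M) - 1 * ?c" by (rule DERIV_diff[OF Fa_deriv[OF M] d2])
    moreover have "?c \<le> 1 / (4 * x^2 + M)"
    proof -
      have "\<bar>x\<bar> \<le> \<bar>a\<bar>" using x a by auto
      then have "x^2 \<le> a^2" by (simp only: abs_le_square_iff)
      then have "4 * x^2 + M \<le> 4 * a^2 + M" by simp
      moreover have "0 < 4 * x^2 + M" using M by (simp add: add_nonneg_pos)
      moreover have "0 < 4 * a^2 + M" using M by (simp add: add_nonneg_pos)
      ultimately show ?thesis using divide_left_mono[of "4*x^2+M" "4*a^2+M" 1] by simp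
    qed
    ultimately show "\<exists>y. DERIV ?h x :> y \<and> y \<ge> 0" by auto
  qed
  then have "Fa M (a - 2) - (a - 2) * ?c \<le> Fa M a - a * ?c" .
  then have "a * ?c - (a - 2) * ?c \<le> Fa M a - Fa M (a - 2)" by linarith
  moreover have "a * ?c - (a - 2) * ?c = (a - (a - 2)) * ?c" by (rule left_diff_distrib[symmetric])
  moreover have "(a - (a - 2)) * ?c = 2 / (4 * a^2 + M)" by simp
  ultimately show ?thesis by simp
qed

lemma sum_arct:
  fixes n :: nat and M :: real
  assumes M: "M > 4" and LH: "L \<le> H" and nH: "real n - 2 * real H = 1"
  shows "(\<Sum>j\<in>{L..H}. 1 / (4 * (real n - 2 * real j)^2 + M)) \<le> 1/(2*M) + 2/(3*M^2) + pi / (8 * sqrt M)"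
proof -
  define g where "g j = real n - 2 * real j" for j
  have M0: "M > 0" using M by simp
  have "sqrt 4 < sqrt M" using M real_sqrt_less_iff by blast
  then have s: "sqrt M > 2" by simp
  have s0: "sqrt M > 0" using s by linarith
  have sq: "(sqrt M)^2 = M" using M0 by simp
  have "{L..H} = insert H {L..<H}" using LH by auto
  then have split: "(\<Sum>j\<in>{L..H}. 1 / (4 * (g j)^2 + M)) = 1 / (4 * (g H)^2 + M) + (\<Sum>j\<in>{L..<H}. 1 / (4 * (g j)^2 + M))"
    by simp
  have gH: "g H = 1" using nH unfolding g_def by simp
  have tele: "(\<Sum>j\<in>{L..<H}. 1 / (4 * (g j)^2 + M)) \<le> (\<Sum>j\<in>{L..<H}. (Fa M (g j) - Fa M (g (Suc j))) / 2)"
  proof (rule sum_mono)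
    fix j assume j: "j \<in> {L..<H}"
    then have "g j \<ge> 1" using nH unfolding g_def by auto
    from arct_step[OF M0 this] have "2 / (4 * (g j)^2 + M) \<le> Fa M (g j) - Fa M (g j - 2)" .
    moreover have "g j - 2 = g (Suc j)" unfolding g_def by simp
    ultimately show "1 / (4 * (g j)^2 + M) \<le> (Fa M (g j) - Fa M (g (Suc j))) / 2" by simp
  qed
  have "(\<Sum>j\<in>{L..<H}. (Fa M (g j) - Fa M (g (Suc j))) / 2) = (\<Sum>j\<in>{L..<H}. Fa M (g j) - Fa M (g (Suc j))) / 2"
    by (simp add: sum_divide_distrib)
  also have "(\<Sum>j\<in>{L..<H}. Fa M (g j) - Fa M (g (Suc j))) = Fa M (g L) - Fa M (g H)"
    using sum_Suc_diff'[OF LH, of "\<lambda>j. - Fa M (g j)"] by simp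
  finally have t2: "(\<Sum>j\<in>{L..<H}. (Fa M (g j) - Fa M (g (Suc j))) / 2) = (Fa M (g L) - Fa M 1) / 2"
    using gH by simp
  have up: "Fa M (g L) \<le> pi / (4 * sqrt M)"
  proof -
    have "arctan (2 * g L / sqrt M) \<le> pi / 2" using arctan_ubound[of "2 * g L / sqrt M"] by simp
    then have "arctan (2 * g L / sqrt M) / (2 * sqrt M) \<le> (pi / 2) / (2 * sqrt M)"
      using s0 by (intro divide_right_mono) auto
    then show ?thesis unfolding Fa_def by simp
  qed
  define v where "v = 2 / sqrt M"
  have v0: "0 \<le> v" "v < 1"
  proof -
    show "0 \<le> v" unfolding v_def using s0 by (intro divide_nonneg_pos) auto
    have "2 / sqrt M < sqrt M / sqrt M" using s s0 by (intro divide_strict_right_mono) auto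
    then show "v < 1" unfolding v_def using s0 by simp
  qed
  have lo: "v - v^3/3 \<le> arctan v"
  proof -
    have "(\<Sum>k<2 * 1. (- 1) ^ k * (1 / real (k * 2 + 1) * v ^ (k * 2 + 1))) = v - v^3/3"
      by (simp add: numeral_2_eq_2 power3_eq_cube)
    then show ?thesis using arctan_lower_bound[OF v0, of 1] by simp
  qed
  have Fa1: "Fa M 1 = arctan v / (2 * sqrt M)" unfolding Fa_def v_def by simp
  have "(\<Sum>j\<in>{L..H}. 1 / (4 * (g j)^2 + M)) \<le> 1 / (4 + M) + (pi / (4 * sqrt M) - (v - v^3/3) / (2 * sqrt M)) / 2"
  proof -
    have "Fa M 1 \<ge> (v - v^3/3) / (2 * sqrt M)" unfolding Fa1 using lo s0 by (simp add: divide_right_mono)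
    then show ?thesis using split tele t2 up gH by simp
  qed
  also have "\<dots> = 1 / (4 + M) - 1/(2*M) + 2/(3*M^2) + pi / (8 * sqrt M)"
  proof -
    have "v / (4 * sqrt M) = 2 / (4 * (sqrt M)^2)" unfolding v_def by (simp add: power2_eq_square)
    then have e1: "v / (4 * sqrt M) = 1 / (2 * M)" by (simp add: sq)
    have "v^3 / (12 * sqrt M) = 8 / (12 * ((sqrt M)^2)^2)" unfolding v_def
      by (simp add: power_divide power2_eq_square power3_eq_cube)
    then have e2: "v^3 / (12 * sqrt M) = 2 / (3 * M^2)" by (simp add: sq)
    have "(pi / (4 * sqrt M) - (v - v^3/3) / (2 * sqrt M)) / 2
          = pi / (8 * sqrt M) - v / (4 * sqrt M) + v^3 / (12 * sqrt M)"
      by (simp add: diff_divide_distrib)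
    then show ?thesis using e1 e2 by simp
  qed
  also have "\<dots> \<le> 1/(2*M) + 2/(3*M^2) + pi / (8 * sqrt M)"
  proof -
    have "1 / (4 + M) \<le> 1 / M" using M0 by (intro divide_left_mono) auto
    then show ?thesis by (simp add: field_simps)
  qed
  finally show ?thesis unfolding g_def .
qed

lemma ln_tangent:
  fixes x c :: real
  assumes "x > 0" "c > 0"
  shows "ln x \<le> ln c + x / c - 1"
proof -
  have "ln (x / c) \<le> x / c - 1" using ln_le_minus_one[of "x / c"] assms by simp
  then show ?thesis using assms by (simp add: ln_div)
qed

lemma tele_part:
  fixes P :: real and n k0 K :: nat
  assumes P: "P \<ge> 0" and kK: "k0 \<le> K" and k0: "n < 4 * k0" and KK: "4 * K + 2 = 2 * n"
  shows "(\<Sum>k\<in>{k0<..K}. 1 / (P + (4 * real k - real n) / real n))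
         \<le> real n / 4 * (ln (real n) / 2 - 1 + (1 + 1 / (P + (4 * real k0 - real n) / real n)) / sqrt (real n))"
proof -
  define N where "N = real n"
  have "n > 0" using KK by linarith
  then have N0: "N > 0" unfolding N_def by simp
  define f where "f k = P + (4 * real k - N) / N" for k
  have "real n < real (4 * k0)" using k0 by (simp only: of_nat_less_iff)
  then have k0r: "N < 4 * real k0" unfolding N_def by simp
  have fpos: "f k > 0" if "k \<ge> k0" for k
  proof -
    have "real k0 \<le> real k" using that by simp
    then have "0 < 4 * real k - N" using k0r by linarith
    then show ?thesis unfolding f_def using P N0 by (simp add: add_nonneg_pos)
  qed
  have fstep: "f (Suc k) = f k + 4 / N" for k
    unfolding f_def using N0 by (simp add: field_simps)
  have d0: "4 / N > 0" using N0 by simp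
  have T: "(\<Sum>k\<in>{k0<..K}. 1 / f k) \<le> (ln (f K) - ln (f k0)) / (4 / N)"
    by (rule ln_tele[of k0 f "4 / N", OF fpos fstep d0 kK])
  have fk0: "f k0 > 0" using fpos by simp
  have fK: "f K > 0" using fpos kK by simp
  have "real (4 * K + 2) = real (2 * n)" using KK by (simp only:)
  then have "4 * real K + 2 = 2 * N" unfolding N_def by simp
  then have KN: "4 * real K - N = N - 2" by linarith
  have fKe: "f K = f k0 + (N - 2 - (4 * real k0 - N)) / N" unfolding f_def KN using N0 by (simp add: field_simps)
  have ratio: "f K / f k0 \<le> 1 + 1 / f k0"
  proof -
    define D where "D = (N - 2 - (4 * real k0 - N)) / N"
    have "f K = f k0 + D" unfolding D_def by (rule fKe)
    then have "f K / f k0 = 1 + D / f k0" using fk0 by (simp add: add_divide_distrib)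
    moreover have "D \<le> 1" unfolding D_def using k0r N0 by (simp add: divide_le_eq)
    then have "D / f k0 \<le> 1 / f k0" using fk0 by (intro divide_right_mono) auto
    ultimately show ?thesis by simp
  qed
  have s0: "sqrt N > 0" using N0 by simp
  have "ln (f K) - ln (f k0) = ln (f K / f k0)" using fK fk0 by (simp add: ln_div)
  also have "\<dots> \<le> ln (sqrt N) + (f K / f k0) / sqrt N - 1"
    by (rule ln_tangent) (use fK fk0 s0 in auto)
  also have "\<dots> \<le> ln N / 2 + (1 + 1 / f k0) / sqrt N - 1"
  proof -
    have "(f K / f k0) / sqrt N \<le> (1 + 1 / f k0) / sqrt N"
      using ratio s0 by (intro divide_right_mono) auto
    moreover have "ln (sqrt N) = ln N / 2" using N0 by (simp add: ln_sqrt)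
    ultimately show ?thesis by linarith
  qed
  finally have L: "ln (f K) - ln (f k0) \<le> ln N / 2 - 1 + (1 + 1 / f k0) / sqrt N" by linarith
  have "(ln (f K) - ln (f k0)) / (4 / N) = N / 4 * (ln (f K) - ln (f k0))" by simp
  also have "\<dots> \<le> N / 4 * (ln N / 2 - 1 + (1 + 1 / f k0) / sqrt N)"
    using L N0 by (intro mult_left_mono) auto
  finally have X: "(ln (f K) - ln (f k0)) / (4 / N) \<le> N / 4 * (ln N / 2 - 1 + (1 + 1 / f k0) / sqrt N)" .
  have "(\<Sum>k\<in>{k0<..K}. 1 / f k) \<le> N / 4 * (ln N / 2 - 1 + (1 + 1 / f k0) / sqrt N)"
    using T X by linarith
  then show ?thesis unfolding f_def N_def .
qed

lemma innerB:
  fixes t n :: nat and P :: real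
  assumes t: "t \<ge> 1" and n: "n = 4 * t + 3" and P: "P \<ge> 0"
  shows "(\<Sum>k\<in>{t+1..2*t+1}. 1 / (P + Qn n k))
     \<le> 1 / (P + 3 / (2 * real n)) + 1 / (P + 5 / real n)
        + real n / 4 * (ln (real n) / 2 - 1 + (1 + 1 / (P + 5 / real n)) / sqrt (real n))"
proof -
  have set: "{t+1..2*t+1} = insert (t+1) (insert (t+2) {t+2<..2*t+1})" using t by auto
  have q1: "Qn n (t+1) = 3 / (2 * real n)" unfolding Qn_def n by simp
  have r2: "4 * real (t+2) - real n = 5" unfolding n by simp
  have q2: "Qn n (t+2) = 5 / real n" unfolding Qn_def using r2 n by simp
  have qk: "Qn n k = (4 * real k - real n) / real n" if "k \<in> {t+2<..2*t+1}" for k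
    using that unfolding Qn_def n by auto
  have "(\<Sum>k\<in>{t+2<..2*t+1}. 1 / (P + Qn n k)) = (\<Sum>k\<in>{t+2<..2*t+1}. 1 / (P + (4 * real k - real n) / real n))"
    by (rule sum.cong) (simp_all add: qk)
  also have "\<dots> \<le> real n / 4 * (ln (real n) / 2 - 1 + (1 + 1 / (P + (4 * real (t+2) - real n) / real n)) / sqrt (real n))"
    by (rule tele_part) (use P t n in auto)
  finally have T: "(\<Sum>k\<in>{t+2<..2*t+1}. 1 / (P + Qn n k)) \<le> real n / 4 * (ln (real n) / 2 - 1 + (1 + 1 / (P + 5 / real n)) / sqrt (real n))"
    unfolding r2 .
  have "(\<Sum>k\<in>{t+1..2*t+1}. 1 / (P + Qn n k)) = 1 / (P + Qn n (t+1)) + (1 / (P + Qn n (t+2)) + (\<Sum>k\<in>{t+2<..2*t+1}. 1 / (P + Qn n k)))"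
    unfolding set by simp
  then show ?thesis using T q1 q2 by simp
qed

lemma innerA:
  fixes t n :: nat and P :: real
  assumes t: "t \<ge> 1" and n: "n = 4 * t + 1" and P: "P \<ge> 0"
  shows "(\<Sum>k\<in>{t+1..2*t}. 1 / (P + Qn n k))
     \<le> 1 / (P + 3 / real n)
        + real n / 4 * (ln (real n) / 2 - 1 + (1 + 1 / (P + 3 / real n)) / sqrt (real n))"
proof -
  have set: "{t+1..2*t} = insert (t+1) {t+1<..2*t}" using t by auto
  have r1: "4 * real (t+1) - real n = 3" unfolding n by simp
  have q1: "Qn n (t+1) = 3 / real n" unfolding Qn_def using r1 n by simp
  have qk: "Qn n k = (4 * real k - real n) / real n" if "k \<in> {t+1<..2*t}" for k
    using that unfolding Qn_def n by auto
  have "(\<Sum>k\<in>{t+1<..2*t}. 1 / (P + Qn n k)) = (\<Sum>k\<in>{t+1<..2*t}. 1 / (P + (4 * real k - real n) / real n))"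
    by (rule sum.cong) (simp_all add: qk)
  also have "\<dots> \<le> real n / 4 * (ln (real n) / 2 - 1 + (1 + 1 / (P + (4 * real (t+1) - real n) / real n)) / sqrt (real n))"
    by (rule tele_part) (use P t n in auto)
  finally have T: "(\<Sum>k\<in>{t+1<..2*t}. 1 / (P + Qn n k)) \<le> real n / 4 * (ln (real n) / 2 - 1 + (1 + 1 / (P + 3 / real n)) / sqrt (real n))"
    unfolding r1 .
  have "(\<Sum>k\<in>{t+1..2*t}. 1 / (P + Qn n k)) = 1 / (P + Qn n (t+1)) + (\<Sum>k\<in>{t+1<..2*t}. 1 / (P + Qn n k))"
    unfolding set by simp
  then show ?thesis using T q1 by simp
qed

lemma polyB:
  fixes s l :: real
  assumes s: "s \<ge> 55677/10000" and l: "l \<ge> 34327/10000"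
  shows "s^2/3 + 8/27 + 3208/10000 * s^3 + s^2/10 + 2/75 + 1757/10000 * s^3
     + (s^4 + s^2) * (l/2 - 1) / 16 + (s^3 + s) / 16 + s^3/40 + s/150 + 1757/40000 * s^4
     \<le> s^4 * l / 16"
proof -
  have s0: "s > 0" using s by simp
  have "s^2 \<ge> 1" using s by (simp add: one_le_power)
  then have "s^2 * 1 \<le> s^2 * s^2" by (intro mult_left_mono) auto
  moreover have "s^2 * s^2 = s^4" by algebra
  ultimately have s42: "s^4 - s^2 \<ge> 0" by simp
  have A: "(s^4 - s^2) * (34327/10000) \<le> (s^4 - s^2) * l" by (rule mult_left_mono[OF l s42])
  have A': "34327/10000 * s^4 - 34327/10000 * s^2 \<le> l * s^4 - l * s^2"
    using A by (simp add: algebra_simps diff_divide_distrib)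
  have s3: "s^4 \<ge> 55677/10000 * s^3" using mult_right_mono[OF s, of "s^3"] s0 by (simp add: power_eq_if)
  have s2: "s^3 \<ge> 55677/10000 * s^2" using mult_right_mono[OF s, of "s^2"] s0 by (simp add: power_eq_if)
  have s1: "s^2 \<ge> 55677/10000 * s" using mult_right_mono[OF s, of "s"] s0 by (simp add: power_eq_if)
  have eq: "s^2/3 + 8/27 + 3208/10000 * s^3 + s^2/10 + 2/75 + 1757/10000 * s^3
     + (s^4 + s^2) * (l/2 - 1) / 16 + (s^3 + s) / 16 + s^3/40 + s/150 + 1757/40000 * s^4
     = l * s^4 / 32 + l * s^2 / 32 - 743/40000 * s^4 + 73/125 * s^3
       + 89/240 * s^2 + 83/1200 * s + 218/675"
    by (simp add: algebra_simps add_divide_distrib diff_divide_distrib)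
  have eq2: "s^4 * l / 16 = l * s^4 / 16" by simp
  show ?thesis unfolding eq eq2 using A' s3 s2 s1 s by linarith
qed
lemma polyA:
  fixes s l :: real
  assumes s: "s \<ge> 45825/10000" and l: "l \<ge> 2772/1000"
  shows "s^2/6 + 2/27 + 2268/10000 * s^3 + (s^4 - s^2) * (l/2 - 1) / 16 + (s^3 - s) / 16
     + s^3/24 + s/54 + 567/10000 * s^4 \<le> s^4 * l / 16"
proof -
  have s0: "s > 0" using s by simp
  have p4: "s^4 \<ge> 0" and p2: "s^2 \<ge> 0" by simp_all
  have A1: "2772/1000 * s^4 \<le> l * s^4" using mult_right_mono[OF l p4] by simp
  have A2: "2772/1000 * s^2 \<le> l * s^2" using mult_right_mono[OF l p2] by simp
  have s3: "s^4 \<ge> 45825/10000 * s^3" using mult_right_mono[OF s, of "s^3"] s0 by (simp add: power_eq_if)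
  have s2: "s^3 \<ge> 45825/10000 * s^2" using mult_right_mono[OF s, of "s^2"] s0 by (simp add: power_eq_if)
  have s1: "s^2 \<ge> 45825/10000 * s" using mult_right_mono[OF s, of "s"] s0 by (simp add: power_eq_if)
  have eq: "s^2/6 + 2/27 + 2268/10000 * s^3 + (s^4 - s^2) * (l/2 - 1) / 16 + (s^3 - s) / 16
     + s^3/24 + s/54 + 567/10000 * s^4
     = l * s^4 / 32 - l * s^2 / 32 - 29/5000 * s^4 + 9929/30000 * s^3
       + 11/48 * s^2 - 19/432 * s + 2/27"
    by (simp add: algebra_simps add_divide_distrib diff_divide_distrib)
  have eq2: "s^4 * l / 16 = l * s^4 / 16" by simp
  show ?thesis unfolding eq eq2 using A1 A2 s3 s2 s1 s by linarith
qed

lemma ln2_lb: "(6931/10000::real) \<le> ln 2"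
proof -
  have "ln (2::real) \<in> {(\<Sum>k<4. 2*((2-1)/(2+1))^(2*k+1) / of_nat (2*k+1))..(\<Sum>k<4. 2*((2-1)/(2+1))^(2*k+1) / of_nat (2*k+1)) + 2*(((2-1)/(2+1))^(2*4+1) / (1 - ((2-1)/(2+1))^2) / of_nat (2*4+1))}"
    by (rule ln_approx_bounds) simp
  then have "(\<Sum>k<4. 2*((2-1)/(2+1))^(2*k+1) / of_nat (2*k+1)) \<le> ln (2::real)" by simp
  moreover have "(\<Sum>k<4. 2*((2-1)/(2+1::real))^(2*k+1) / of_nat (2*k+1)) \<ge> 6931/10000"
    by (simp add: eval_nat_numeral)
  ultimately show ?thesis by linarith
qed

lemma ln_ge_1_minus_inv:
  fixes x :: real assumes "x > 0" shows "1 - 1/x \<le> ln x"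
proof -
  have "ln (1/x) \<le> 1/x - 1" using ln_le_minus_one[of "1/x"] assms by simp
  then show ?thesis using assms by (simp add: ln_div)
qed

lemma ln_pow2: "ln ((2::real)^k) = real k * ln 2"
  by (simp add: ln_realpow)

lemma ln_lb_pow2:
  fixes x :: real assumes "x > 0"
  shows "real k * ln 2 + (1 - 2^k / x) \<le> ln x"
proof -
  have p: "(2::real)^k > 0" by simp
  have "ln x = ln (2^k) + ln (x / 2^k)" using assms p by (simp add: ln_div)
  moreover have "1 - 2^k / x \<le> ln (x / 2^k)" using ln_ge_1_minus_inv[of "x / 2^k"] assms p by simp
  ultimately show ?thesis by (simp add: ln_realpow)
qed

lemma inv_eq:
  fixes N a c :: real assumes "N > 0" "c > 0"
  shows "1 / (4 * a^2 / N^2 + c / N) = N^2 * (1 / (4 * a^2 + c * N))"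
proof -
  have p: "4 * a^2 + c * N > 0" using assms by (simp add: add_nonneg_pos)
  have "4 * a^2 / N^2 + c / N = (4 * a^2 + c * N) / N^2" using assms by (simp add: field_simps power2_eq_square)
  then show ?thesis using p assms by simp
qed

lemma pi_sqrt_bound:
  fixes N c r k :: real
  assumes N: "N > 0" and r: "r > 0" "r^2 \<le> c" and k: "31416/10000 \<le> 8 * r * k"
  shows "pi / (8 * sqrt (c * N)) \<le> k / sqrt N"
proof -
  have c: "c > 0" using r by (smt (verit) zero_less_power)
  have sr: "r \<le> sqrt c" using r by (simp add: real_le_rsqrt)
  have sN: "sqrt N > 0" using N by simp
  have "8 * r * sqrt N \<le> 8 * sqrt c * sqrt N" using sr sN by simp
  also have "\<dots> = 8 * sqrt (c * N)" by (simp add: real_sqrt_mult)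
  finally have A: "8 * r * sqrt N \<le> 8 * sqrt (c * N)" .
  have B: "0 < 8 * r * sqrt N" using r sN by simp
  have C: "0 < 8 * sqrt (c * N)" using A B by linarith
  have "pi / (8 * sqrt (c * N)) \<le> pi / (8 * r * sqrt N)"
    using A B C divide_left_mono[of "8 * r * sqrt N" "8 * sqrt (c * N)" pi] by (simp add: less_imp_le)
  also have "\<dots> \<le> (8 * r * k) / (8 * r * sqrt N)"
    using pi_ub k B by (intro divide_right_mono) auto
  also have "\<dots> = k / sqrt N" using r by simp
  finally show ?thesis .
qed

lemma caseB:
  fixes t n :: nat assumes t: "t \<ge> 7" and n: "n = 4 * t + 3"
  shows "(\<Sum>j\<in>{t+1..2*t+1}. \<Sum>k\<in>{t+1..2*t+1}. 1 / (Pn n j + Qn n k)) \<le> (real n)^2 * ln (real n) / 16"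
proof -
  define N where "N = real n"
  define s where "s = sqrt N"
  have N31: "N \<ge> 31" unfolding N_def n using t by simp
  have N0: "N > 0" using N31 by simp
  have s0: "s > 0" unfolding s_def using N0 by simp
  have sN: "s^2 = N" unfolding s_def using N0 by simp
  define g where "g M j = 1 / (4 * (N - 2 * real j)^2 + M)" for M :: real and j :: nat
  define Cc where "Cc = N / 4 * (ln N / 2 - 1 + 1 / s)"
  define J where "J = {t+1..2*t+1}"
  have inner: "(\<Sum>k\<in>J. 1 / (Pn n j + Qn n k)) \<le> N^2 * g (3/2*N) j + N^2 * g (5*N) j + Cc + N^3/(4* s) * g (5*N) j" for j
  proof -
    have P: "Pn n j = 4 * (N - 2 * real j)^2 / N^2" unfolding Pn_def N_def by simp
    have I: "(\<Sum>k\<in>J. 1 / (Pn n j + Qn n k)) \<le> 1 / (Pn n j + 3 / (2 * N)) + 1 / (Pn n j + 5 / N)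
        + N / 4 * (ln N / 2 - 1 + (1 + 1 / (Pn n j + 5 / N)) / s)"
      using innerB[of t n "Pn n j"] t n Pn_nonneg[of n j] unfolding J_def N_def s_def by simp
    have e1: "1 / (Pn n j + 3 / (2 * N)) = N^2 * g (3/2*N) j"
    proof -
      have "3 / (2 * N) = (3/2) / N" by simp
      then show ?thesis unfolding P g_def using inv_eq[OF N0, of "3/2" "N - 2 * real j"] by simp
    qed
    have e2: "1 / (Pn n j + 5 / N) = N^2 * g (5*N) j"
      unfolding P g_def using inv_eq[OF N0, of "5" "N - 2 * real j"] by simp
    have e3: "N / 4 * (ln N / 2 - 1 + (1 + 1 / (Pn n j + 5 / N)) / s) = Cc + N^3/(4* s) * g (5*N) j"
      unfolding e2 Cc_def using s0 by (simp add: field_simps power3_eq_cube power2_eq_square)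
    have I2: "(\<Sum>k\<in>J. 1 / (Pn n j + Qn n k)) \<le> N^2 * g (3/2*N) j + N^2 * g (5*N) j + (Cc + N^3/(4 * s) * g (5*N) j)"
      using I e3 unfolding e1 e2 by linarith
    show ?thesis using I2 by linarith
  qed
  have cardJ: "real (card J) = (N + 1) / 4" unfolding J_def N_def n by simp
  have Sb: "(\<Sum>j\<in>J. g M j) \<le> 1/(2*M) + 2/(3*M^2) + pi / (8 * sqrt M)" if "M > 4" for M
    unfolding J_def g_def N_def by (rule sum_arct) (use that n in auto)
  have M1: "(\<Sum>j\<in>J. g (3/2*N) j) \<le> 1/(3*N) + 8/(27*N^2) + 3208/10000 / s"
  proof -
    have "(\<Sum>j\<in>J. g (3/2*N) j) \<le> 1/(2*(3/2*N)) + 2/(3*(3/2*N)^2) + pi / (8 * sqrt (3/2*N))"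
      by (rule Sb) (use N31 in simp)
    moreover have "pi / (8 * sqrt (3/2*N)) \<le> 3208/10000 / s" unfolding s_def
      by (rule pi_sqrt_bound[OF N0, of "12245/10000"]) (simp_all add: power2_eq_square)
    moreover have "1/(2*(3/2*N)) + 2/(3*(3/2*N)^2) = 1/(3*N) + 8/(27*N^2)"
      by (simp add: power2_eq_square field_simps)
    ultimately show ?thesis by linarith
  qed
  have M2: "(\<Sum>j\<in>J. g (5*N) j) \<le> 1/(10*N) + 2/(75*N^2) + 1757/10000 / s"
  proof -
    have "(\<Sum>j\<in>J. g (5*N) j) \<le> 1/(2*(5*N)) + 2/(3*(5*N)^2) + pi / (8 * sqrt (5*N))"
      by (rule Sb) (use N31 in simp)
    moreover have "pi / (8 * sqrt (5*N)) \<le> 1757/10000 / s" unfolding s_def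
      by (rule pi_sqrt_bound[OF N0, of "2236/1000"]) (simp_all add: power2_eq_square)
    moreover have "1/(2*(5*N)) + 2/(3*(5*N)^2) = 1/(10*N) + 2/(75*N^2)"
      by (simp add: power2_eq_square field_simps)
    ultimately show ?thesis by linarith
  qed
  have "(\<Sum>j\<in>J. \<Sum>k\<in>J. 1 / (Pn n j + Qn n k))
      \<le> (\<Sum>j\<in>J. N^2 * g (3/2*N) j + N^2 * g (5*N) j + Cc + N^3/(4* s) * g (5*N) j)"
    by (rule sum_mono) (rule inner)
  also have "\<dots> = N^2 * (\<Sum>j\<in>J. g (3/2*N) j) + N^2 * (\<Sum>j\<in>J. g (5*N) j) + real (card J) * Cc
      + N^3/(4* s) * (\<Sum>j\<in>J. g (5*N) j)"
    by (simp add: sum.distrib sum_distrib_left)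
  also have "\<dots> \<le> N^2 * (1/(3*N) + 8/(27*N^2) + 3208/10000 / s) + N^2 * (1/(10*N) + 2/(75*N^2) + 1757/10000 / s)
      + (N + 1) / 4 * Cc + N^3/(4* s) * (1/(10*N) + 2/(75*N^2) + 1757/10000 / s)"
  proof -
    have a: "N^2 * (\<Sum>j\<in>J. g (3/2*N) j) \<le> N^2 * (1/(3*N) + 8/(27*N^2) + 3208/10000 / s)"
      using M1 by (intro mult_left_mono) auto
    have b: "N^2 * (\<Sum>j\<in>J. g (5*N) j) \<le> N^2 * (1/(10*N) + 2/(75*N^2) + 1757/10000 / s)"
      using M2 by (intro mult_left_mono) auto
    have c: "N^3/(4* s) * (\<Sum>j\<in>J. g (5*N) j) \<le> N^3/(4* s) * (1/(10*N) + 2/(75*N^2) + 1757/10000 / s)"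
      using M2 N0 s0 by (intro mult_left_mono) auto
    show ?thesis unfolding cardJ using a b c by linarith
  qed
  also have "\<dots> = s^2/3 + 8/27 + 3208/10000 * s^3 + s^2/10 + 2/75 + 1757/10000 * s^3
     + (s^4 + s^2) * (ln N/2 - 1) / 16 + (s^3 + s) / 16 + s^3/40 + s/150 + 1757/40000 * s^4"
    unfolding Cc_def sN[symmetric] using s0
    by (simp add: field_simps) (simp add: algebra_simps power2_eq_square power3_eq_cube power4_eq_xxxx eval_nat_numeral)
  also have "\<dots> \<le> s^4 * ln N / 16"
  proof (rule polyB)
    have "55677/10000 \<le> sqrt (31::real)" by (rule real_le_rsqrt) (simp add: power2_eq_square)
    also have "\<dots> \<le> s" unfolding s_def using N31 by simp
    finally show "55677/10000 \<le> s" .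
    have "real 5 * ln 2 + (1 - 2^5 / N) \<le> ln N" by (rule ln_lb_pow2[OF N0])
    moreover have "1 - 2^5 / N \<ge> 1 - 32/31" using N31 by (simp add: field_simps)
    ultimately show "34327/10000 \<le> ln N" using ln2_lb by simp
  qed
  also have "\<dots> = N^2 * ln N / 16" using sN by (simp add: power_mult[symmetric] power2_eq_square power4_eq_xxxx)
  finally show ?thesis unfolding J_def N_def .
qed

lemma caseA:
  fixes t n :: nat assumes t: "t \<ge> 5" and n: "n = 4 * t + 1"
  shows "(\<Sum>j\<in>{t+1..2*t}. \<Sum>k\<in>{t+1..2*t}. 1 / (Pn n j + Qn n k)) \<le> (real n)^2 * ln (real n) / 16"
proof -
  define N where "N = real n"
  define s where "s = sqrt N"
  have N21: "N \<ge> 21" unfolding N_def n using t by simp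
  have N0: "N > 0" using N21 by simp
  have s0: "s > 0" unfolding s_def using N0 by simp
  have sN: "s^2 = N" unfolding s_def using N0 by simp
  define g where "g M j = 1 / (4 * (N - 2 * real j)^2 + M)" for M :: real and j :: nat
  define Cc where "Cc = N / 4 * (ln N / 2 - 1 + 1 / s)"
  define J where "J = {t+1..2*t}"
  have inner: "(\<Sum>k\<in>J. 1 / (Pn n j + Qn n k)) \<le> N^2 * g (3*N) j + Cc + N^3/(4 * s) * g (3*N) j" for j
  proof -
    have P: "Pn n j = 4 * (N - 2 * real j)^2 / N^2" unfolding Pn_def N_def by simp
    have I: "(\<Sum>k\<in>J. 1 / (Pn n j + Qn n k)) \<le> 1 / (Pn n j + 3 / N)
        + N / 4 * (ln N / 2 - 1 + (1 + 1 / (Pn n j + 3 / N)) / s)"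
      using innerA[of t n "Pn n j"] t n Pn_nonneg[of n j] unfolding J_def N_def s_def by simp
    have e1: "1 / (Pn n j + 3 / N) = N^2 * g (3*N) j"
      unfolding P g_def using inv_eq[OF N0, of "3" "N - 2 * real j"] by simp
    have e3: "N / 4 * (ln N / 2 - 1 + (1 + N^2 * g (3*N) j) / s) = Cc + N^3/(4 * s) * g (3*N) j"
      unfolding Cc_def using s0 by (simp add: field_simps power3_eq_cube power2_eq_square)
    show ?thesis using I e3 unfolding e1 by linarith
  qed
  have cardJ: "real (card J) = (N - 1) / 4" unfolding J_def N_def n by simp
  have Sb: "(\<Sum>j\<in>J. g M j) \<le> 1/(2*M) + 2/(3*M^2) + pi / (8 * sqrt M)" if "M > 4" for M
    unfolding J_def g_def N_def by (rule sum_arct) (use that n t in auto)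
  have M1: "(\<Sum>j\<in>J. g (3*N) j) \<le> 1/(6*N) + 2/(27*N^2) + 2268/10000 / s"
  proof -
    have "(\<Sum>j\<in>J. g (3*N) j) \<le> 1/(2*(3*N)) + 2/(3*(3*N)^2) + pi / (8 * sqrt (3*N))"
      by (rule Sb) (use N21 in simp)
    moreover have "pi / (8 * sqrt (3*N)) \<le> 2268/10000 / s" unfolding s_def
      by (rule pi_sqrt_bound[OF N0, of "1732/1000"]) (simp_all add: power2_eq_square)
    moreover have "1/(2*(3*N)) + 2/(3*(3*N)^2) = 1/(6*N) + 2/(27*N^2)"
      by (simp add: power2_eq_square field_simps)
    ultimately show ?thesis by linarith
  qed
  have "(\<Sum>j\<in>J. \<Sum>k\<in>J. 1 / (Pn n j + Qn n k))
      \<le> (\<Sum>j\<in>J. N^2 * g (3*N) j + Cc + N^3/(4 * s) * g (3*N) j)"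
    by (rule sum_mono) (rule inner)
  also have "\<dots> = N^2 * (\<Sum>j\<in>J. g (3*N) j) + real (card J) * Cc + N^3/(4 * s) * (\<Sum>j\<in>J. g (3*N) j)"
    by (simp add: sum.distrib sum_distrib_left)
  also have "\<dots> \<le> N^2 * (1/(6*N) + 2/(27*N^2) + 2268/10000 / s)
      + (N - 1) / 4 * Cc + N^3/(4 * s) * (1/(6*N) + 2/(27*N^2) + 2268/10000 / s)"
  proof -
    have a: "N^2 * (\<Sum>j\<in>J. g (3*N) j) \<le> N^2 * (1/(6*N) + 2/(27*N^2) + 2268/10000 / s)"
      using M1 by (intro mult_left_mono) auto
    have c: "N^3/(4 * s) * (\<Sum>j\<in>J. g (3*N) j) \<le> N^3/(4 * s) * (1/(6*N) + 2/(27*N^2) + 2268/10000 / s)"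
      using M1 N0 s0 by (intro mult_left_mono) auto
    show ?thesis unfolding cardJ using a c by linarith
  qed
  also have "\<dots> = s^2/6 + 2/27 + 2268/10000 * s^3 + (s^4 - s^2) * (ln N/2 - 1) / 16 + (s^3 - s) / 16
     + s^3/24 + s/54 + 567/10000 * s^4"
    unfolding Cc_def sN[symmetric] using s0
    by (simp add: field_simps) (simp add: algebra_simps power2_eq_square power3_eq_cube power4_eq_xxxx eval_nat_numeral)
  also have "\<dots> \<le> s^4 * ln N / 16"
  proof (rule polyA)
    have "45825/10000 \<le> sqrt (21::real)" by (rule real_le_rsqrt) (simp add: power2_eq_square)
    also have "\<dots> \<le> s" unfolding s_def using N21 by simp
    finally show "45825/10000 \<le> s" .
    have "real 4 * ln 2 + (1 - 2^4 / N) \<le> ln N" by (rule ln_lb_pow2[OF N0])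
    moreover have "1 - 2^4 / N \<ge> 0" using N21 by (simp add: field_simps)
    ultimately show "2772/1000 \<le> ln N" using ln2_lb by simp
  qed
  also have "\<dots> = N^2 * ln N / 16" using sN by (simp add: power_mult[symmetric] power2_eq_square power4_eq_xxxx)
  finally show ?thesis unfolding J_def N_def .
qed

lemma L_B: "nat \<lceil>real (4 * t + 3) / 4\<rceil> = t + 1"
proof -
  have "\<lceil>real (4 * t + 3) / 4\<rceil> = int (t + 1)"
    by (rule ceiling_unique) (simp_all add: field_simps)
  then show ?thesis by simp
qed

lemma L_A: "nat \<lceil>real (4 * t + 1) / 4\<rceil> = t + 1"
proof -
  have "\<lceil>real (4 * t + 1) / 4\<rceil> = int (t + 1)"
    by (rule ceiling_unique) (simp_all add: field_simps)
  then show ?thesis by simp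
qed

lemma fin_close:
  fixes S r :: real and n k :: nat
  assumes "S \<le> r" "r \<le> (real n)^2 * (real k * (6931/10000) + (1 - 2^k / real n)) / 16" "n > 0"
  shows "S \<le> (real n)^2 * ln (real n) / 16"
proof -
  have "real k * ln 2 + (1 - 2^k / real n) \<le> ln (real n)" by (rule ln_lb_pow2) (use assms in simp)
  moreover have "real k * (6931/10000) \<le> real k * ln 2" using ln2_lb by (intro mult_left_mono) auto
  ultimately have "real k * (6931/10000) + (1 - 2^k / real n) \<le> ln (real n)" by linarith
  then have "(real n)^2 * (real k * (6931/10000) + (1 - 2^k / real n)) / 16 \<le> (real n)^2 * ln (real n) / 16"
    by (intro divide_right_mono mult_left_mono) auto
  then show ?thesis using assms by linarith
qed

lemma finB:
  assumes "n = 4 * t + 3" "2 \<le> t" "t \<le> 6"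
  shows "(\<Sum>j\<in>{t+1..2*t+1}. \<Sum>k\<in>{t+1..2*t+1}. 1 / (Pn n j + Qn n k)) \<le> (real n)^2 * ln (real n) / 16"
proof -
  have "t = 2 \<or> t = 3 \<or> t = 4 \<or> t = 5 \<or> t = 6" using assms by auto
  then show ?thesis
  proof (elim disjE)
    assume t: "t = 2"
    show ?thesis unfolding assms(1) t
      by (rule fin_close[of _ "1609/100" _ 3]) (simp_all add: Pn_def Qn_def numeral_eq_Suc)
  next
    assume t: "t = 3"
    show ?thesis unfolding assms(1) t
      by (rule fin_close[of _ "3021/100" _ 3]) (simp_all add: Pn_def Qn_def numeral_eq_Suc)
  next
    assume t: "t = 4"
    show ?thesis unfolding assms(1) t
      by (rule fin_close[of _ "4878/100" _ 4]) (simp_all add: Pn_def Qn_def numeral_eq_Suc)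
  next
    assume t: "t = 5"
    show ?thesis unfolding assms(1) t
      by (rule fin_close[of _ "7179/100" _ 4]) (simp_all add: Pn_def Qn_def numeral_eq_Suc)
  next
    assume t: "t = 6"
    show ?thesis unfolding assms(1) t
      by (rule fin_close[of _ "9927/100" _ 4]) (simp_all add: Pn_def Qn_def numeral_eq_Suc)
  qed
qed

lemma finA:
  assumes "n = 4 * t + 1" "1 \<le> t" "t \<le> 4"
  shows "(\<Sum>j\<in>{t+1..2*t}. \<Sum>k\<in>{t+1..2*t}. 1 / (Pn n j + Qn n k)) \<le> (real n)^2 * ln (real n) / 16"
proof -
  have "t = 1 \<or> t = 2 \<or> t = 3 \<or> t = 4" using assms by auto
  then show ?thesis
  proof (elim disjE)
    assume t: "t = 1"
    show ?thesis unfolding assms(1) t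
      by (rule fin_close[of _ "132/100" _ 2]) (simp_all add: Pn_def Qn_def numeral_eq_Suc)
  next
    assume t: "t = 2"
    show ?thesis unfolding assms(1) t
      by (rule fin_close[of _ "593/100" _ 3]) (simp_all add: Pn_def Qn_def numeral_eq_Suc)
  next
    assume t: "t = 3"
    show ?thesis unfolding assms(1) t
      by (rule fin_close[of _ "1419/100" _ 3]) (simp_all add: Pn_def Qn_def numeral_eq_Suc)
  next
    assume t: "t = 4"
    show ?thesis unfolding assms(1) t
      by (rule fin_close[of _ "2625/100" _ 4]) (simp_all add: Pn_def Qn_def numeral_eq_Suc)
  qed
qed

lemma p_taylor:
  assumes "2 * j + 1 \<le> n"
  shows "(31415/10000 * (real n - 2 * real j) / real n)^2 / 2 - (31416/10000 * (real n - 2 * real j) / real n)^4 / 24 \<le> 1 + cc n j"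
proof -
  have n0: "real n > 0" using assms by simp
  define a where "a = real n - 2 * real j"
  have a0: "0 \<le> a" unfolding a_def using assms by linarith
  define y where "y = pi * a / real n"
  have "2 * pi * real j / real n = pi - y" using n0 unfolding y_def a_def by (simp add: field_simps)
  then have c: "1 + cc n j = 1 - cos y" unfolding cc_def by simp
  have y0: "31415/10000 * a / real n \<le> y" unfolding y_def using pi_lb a0 n0
    by (intro divide_right_mono mult_right_mono) auto
  have y1: "y \<le> 31416/10000 * a / real n" unfolding y_def using pi_ub a0 n0
    by (intro divide_right_mono mult_right_mono) auto
  have l0: "0 \<le> 31415/10000 * a / real n" using a0 n0 by simp
  have "(31415/10000 * a / real n)^2 \<le> y^2" by (rule power_mono[OF y0 l0])
  moreover have "y^4 \<le> (31416/10000 * a / real n)^4" by (rule power_mono[OF y1]) (use l0 y0 in linarith)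
  moreover have "y^2/2 - y^4/24 \<le> 1 - cos y" using cos_le_quartic[of y] by simp
  ultimately show ?thesis using c unfolding a_def by simp
qed

lemma q_taylor:
  assumes "n < 4 * k" "2 * k + 1 \<le> n"
  shows "31415/10000 * (4 * real k - real n) / (2 * real n) - (31416/10000 * (4 * real k - real n) / (2 * real n))^3 / 6 \<le> - cc n k"
proof -
  have n0: "real n > 0" using assms by simp
  define b where "b = 4 * real k - real n"
  have "real n \<le> real (4 * k)" using assms(1) by (simp only: of_nat_le_iff)
  then have b0: "0 \<le> b" unfolding b_def by simp
  define x where "x = pi * b / (2 * real n)"
  have "2 * pi * real k / real n = x + pi/2" using n0 unfolding x_def b_def by (simp add: field_simps)
  then have c: "- cc n k = sin x" unfolding cc_def by (simp add: cos_add)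
  have x0: "31415/10000 * b / (2 * real n) \<le> x" unfolding x_def using pi_lb b0 n0
    by (intro divide_right_mono mult_right_mono) auto
  have x1: "x \<le> 31416/10000 * b / (2 * real n)" unfolding x_def using pi_ub b0 n0
    by (intro divide_right_mono mult_right_mono) auto
  have l0: "0 \<le> 31415/10000 * b / (2 * real n)" using b0 n0 by simp
  have "x^3 \<le> (31416/10000 * b / (2 * real n))^3" by (rule power_mono[OF x1]) (use l0 x0 in linarith)
  moreover have "x - x^3/6 \<le> sin x" using sin_ge_cubic[of x] l0 x0 by simp
  ultimately show ?thesis using c x0 unfolding b_def by simp
qed

lemma inv_abs_le: "0 < (c::real) \<Longrightarrow> c \<le> x \<Longrightarrow> 1 / \<bar>x\<bar> \<le> 1 / c"
  by (simp add: divide_left_mono)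

lemma term7:
  assumes "j \<in> {2, 3}" "k \<in> {2, 3}"
  shows "1 / \<bar>cc 7 j - cc 7 k + 1\<bar> \<le>
    1 / ((31415/10000 * (7 - 2 * real j) / 7)^2 / 2 - (31416/10000 * (7 - 2 * real j) / 7)^4 / 24
       + (31415/10000 * (4 * real k - 7) / 14 - (31416/10000 * (4 * real k - 7) / 14)^3 / 6))"
proof (rule inv_abs_le)
  have p: "(31415/10000 * (7 - 2 * real j) / 7)^2 / 2 - (31416/10000 * (7 - 2 * real j) / 7)^4 / 24 \<le> 1 + cc 7 j"
    using p_taylor[of j 7] assms by auto
  have q: "31415/10000 * (4 * real k - 7) / 14 - (31416/10000 * (4 * real k - 7) / 14)^3 / 6 \<le> - cc 7 k"
    using q_taylor[of 7 k] assms by auto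
  show "(31415/10000 * (7 - 2 * real j) / 7)^2 / 2 - (31416/10000 * (7 - 2 * real j) / 7)^4 / 24
       + (31415/10000 * (4 * real k - 7) / 14 - (31416/10000 * (4 * real k - 7) / 14)^3 / 6) \<le> cc 7 j - cc 7 k + 1"
    using p q by linarith
  show "0 < (31415/10000 * (7 - 2 * real j) / 7)^2 / 2 - (31416/10000 * (7 - 2 * real j) / 7)^4 / 24
       + (31415/10000 * (4 * real k - 7) / 14 - (31416/10000 * (4 * real k - 7) / 14)^3 / 6)"
    using assms by (auto simp: eval_nat_numeral)
qed

lemma case7: "(\<Sum>j\<in>{2..3::nat}. \<Sum>k\<in>{2..3::nat}. 1 / \<bar>cc 7 j - cc 7 k + 1\<bar>) \<le> (real 7)^2 * ln (real 7) / 16"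
proof (rule fin_close[of _ "5737/1000" _ 3])
  have "(\<Sum>j\<in>{2..3::nat}. \<Sum>k\<in>{2..3::nat}. 1 / \<bar>cc 7 j - cc 7 k + 1\<bar>) \<le>
     (\<Sum>j\<in>{2..3::nat}. \<Sum>k\<in>{2..3::nat}. 1 / ((31415/10000 * (7 - 2 * real j) / 7)^2 / 2 - (31416/10000 * (7 - 2 * real j) / 7)^4 / 24
       + (31415/10000 * (4 * real k - 7) / 14 - (31416/10000 * (4 * real k - 7) / 14)^3 / 6)))"
    by (intro sum_mono term7) auto
  also have "\<dots> \<le> 5737/1000" by (simp add: numeral_eq_Suc)
  finally show "(\<Sum>j\<in>{2..3::nat}. \<Sum>k\<in>{2..3::nat}. 1 / \<bar>cc 7 j - cc 7 k + 1\<bar>) \<le> 5737/1000" .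
qed simp_all

theorem mainTheorem6:
  fixes n :: nat
  assumes "n \<ge> 5" and "odd n"
  shows "3/2 * (\<Sum>j = nat \<lceil>real n / 4\<rceil>..(n - 1) div 2.
                 \<Sum>k = nat \<lceil>real n / 4\<rceil>..(n - 1) div 2.
                   1 / \<bar>cc n j - cc n k + 1\<bar>)
         \<le> 3/32 * (real n)^2 * ln (real n)"
proof -
  define L where "L = nat \<lceil>real n / 4\<rceil>"
  define H where "H = (n - 1) div 2"
  have key: "(\<Sum>j = L..H. \<Sum>k = L..H. 1 / \<bar>cc n j - cc n k + 1\<bar>) \<le> (real n)^2 * ln (real n) / 16"
  proof (cases "n = 7")
    case True
    have "L = 2" unfolding L_def True using L_B[of 1] by simp
    moreover have "H = 3" unfolding H_def True by simp
    ultimately show ?thesis using case7 True by simp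
  next
    case False
    have A: "(\<Sum>j = L..H. \<Sum>k = L..H. 1 / \<bar>cc n j - cc n k + 1\<bar>) \<le> (\<Sum>j = L..H. \<Sum>k = L..H. 1 / (Pn n j + Qn n k))"
      unfolding L_def H_def by (intro sum_mono term_bound) (use assms in auto)
    define t where "t = n div 4"
    have "n mod 4 = 1 \<or> n mod 4 = 3" using assms(2) by presburger
    then have "n = 4 * t + 1 \<or> n = 4 * t + 3" unfolding t_def by presburger
    then have B: "(\<Sum>j = L..H. \<Sum>k = L..H. 1 / (Pn n j + Qn n k)) \<le> (real n)^2 * ln (real n) / 16"
    proof
      assume n: "n = 4 * t + 1"
      have t1: "t \<ge> 1" using assms(1) n by simp
      have "L = t + 1" unfolding L_def n by (rule L_A)
      moreover have "H = 2 * t" unfolding H_def n by simp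
      ultimately show ?thesis
      proof (cases "t \<ge> 5")
        case True
        then show ?thesis using caseA[OF True n] \<open>L = t + 1\<close> \<open>H = 2 * t\<close> by simp
      next
        case False
        then show ?thesis using finA[OF n t1] \<open>L = t + 1\<close> \<open>H = 2 * t\<close> by simp
      qed
    next
      assume n: "n = 4 * t + 3"
      have t2: "t \<ge> 2" using assms(1) n False by simp
      have "L = t + 1" unfolding L_def n by (rule L_B)
      moreover have "H = 2 * t + 1" unfolding H_def n by simp
      ultimately show ?thesis
      proof (cases "t \<ge> 7")
        case True
        then show ?thesis using caseB[OF True n] \<open>L = t + 1\<close> \<open>H = 2 * t + 1\<close> by simp
      next
        case False
        then show ?thesis using finB[OF n t2] \<open>L = t + 1\<close> \<open>H = 2 * t + 1\<close> by simp
      qed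
    qed
    show ?thesis using A B by linarith
  qed
  then show ?thesis unfolding L_def H_def by linarith
qed

end
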